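(* Let $X$ be a Banach space as described in the context, let $f\in X$, and assume $\mu_1:=\liminf_{n\to\infty}\|z^n\|^{1/n}>0$. If $f$ is (the restriction to $\mathbb{D}$ of) an entire function, then $$\lim_{n\to\infty}\left\{\frac{E_n(f)}{\|z^n\|}\right\}^{1/n}=0.$$ Conversely, if this limit relation holds, then the sequence $(p_n^* )$ of polynomials of best approximation of $f$ in the norm of $X$ converges uniformly in each disk $|z|<r$, $r\in(0,\mu_1)$, to some entire function.
   Context: $\mathbb{D}=\{z\in\mathbb{C}:|z|<1\}$. Here $X$ is a complex Banach space of functions defined in $\mathbb{D}$ (not necessarily analytic) whose norm $\|\cdot\|$ satisfies: (i) $\|f(\cdot\, e^{it})\|=\|f(\cdot)\|$ for all $t\in\mathbb{R}$ and $f\in X$; (ii) $\|f\|<\infty$ for every entire function $f$ (so $X$ contains all entire functions); (iii) for all $f\in X$ and $g\in L[0,2\pi]$, $\big\|\frac{1}{2\pi}\int_0^{2\pi} f(ze^{it})g(t)\,dt\big\|\le \frac{1}{2\pi}\int_0^{2\pi}|g(t)|\,dt\cdot\|f\|$. For $n\ge 1$, $\mathcal{P}_n$ is the set of complex polynomials of degree at most $n-1$, $E_n(f)=\inf_{p\in\mathcal{P}_n}\|f-p\|$, $p_n^*\in\mathcal{P}_n$ is a polynomial with $\|f-p_n^*\|=E_n(f)$, and $\|z^n\|$ is the norm in $X$ of the monomial $z\mapsto z^n$. *)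

theory Defs
  imports "HOL-Analysis.Analysis"
begin

text \<open>Elements of X are functions on the unit disk; we represent them canonically as
  functions complex \<Rightarrow> complex vanishing outside the open unit disk.\<close>

definition restr :: "(complex \<Rightarrow> complex) \<Rightarrow> complex \<Rightarrow> complex" where
  "restr g = (\<lambda>z. if z \<in> ball 0 1 then g z else 0)"

definition mono_fn :: "nat \<Rightarrow> complex \<Rightarrow> complex" where
  "mono_fn n = restr (\<lambda>z. z ^ n)"

definition admissible_space :: "(complex \<Rightarrow> complex) set \<Rightarrow> ((complex \<Rightarrow> complex) \<Rightarrow> real) \<Rightarrow> bool" where
  "admissible_space X N \<longleftrightarrow>
     (\<forall>f\<in>X. \<forall>z. z \<notin> ball 0 1 \<longrightarrow> f z = 0) \<and>
     (\<lambda>z. 0) \<in> X \<and>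
     (\<forall>f\<in>X. \<forall>g\<in>X. (\<lambda>z. f z + g z) \<in> X) \<and>
     (\<forall>f\<in>X. \<forall>c. (\<lambda>z. c * f z) \<in> X) \<and>
     (\<forall>f\<in>X. N f = 0 \<longleftrightarrow> f = (\<lambda>z. 0)) \<and>
     (\<forall>f\<in>X. \<forall>g\<in>X. N (\<lambda>z. f z + g z) \<le> N f + N g) \<and>
     (\<forall>f\<in>X. \<forall>c. N (\<lambda>z. c * f z) = cmod c * N f) \<and>
     (\<forall>s. (\<forall>n. s n \<in> X) \<longrightarrow>
          (\<forall>e>0. \<exists>M. \<forall>m\<ge>M. \<forall>n\<ge>M. N (\<lambda>z. s m z - s n z) < e) \<longrightarrow>
          (\<exists>f\<in>X. (\<lambda>n. N (\<lambda>z. s n z - f z)) \<longlonglongrightarrow> 0)) \<and>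
     \<comment> \<open>(i) rotation invariance\<close>
     (\<forall>f\<in>X. \<forall>t::real. (\<lambda>z. f (z * cis t)) \<in> X \<and> N (\<lambda>z. f (z * cis t)) = N f) \<and>
     \<comment> \<open>(ii) X contains all entire functions\<close>
     (\<forall>g. g holomorphic_on UNIV \<longrightarrow> restr g \<in> X) \<and>
     \<comment> \<open>(iii) convolution inequality\<close>
     (\<forall>f\<in>X. \<forall>g::real \<Rightarrow> complex. set_integrable lborel {0..2*pi} g \<longrightarrow>
        (\<lambda>z. (1 / (2*pi)) * (LINT t:{0..2*pi}|lborel. f (z * cis t) * g t)) \<in> X \<and>
        N (\<lambda>z. (1 / (2*pi)) * (LINT t:{0..2*pi}|lborel. f (z * cis t) * g t))
          \<le> (1 / (2*pi)) * (LINT t:{0..2*pi}|lborel. cmod (g t)) * N f)"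

definition poly_space :: "nat \<Rightarrow> (complex \<Rightarrow> complex) set" where
  "poly_space n = {restr (poly q) | q :: complex poly. degree q < n}"

definition best_approx_error ::
  "((complex \<Rightarrow> complex) \<Rightarrow> real) \<Rightarrow> nat \<Rightarrow> (complex \<Rightarrow> complex) \<Rightarrow> real" where
  "best_approx_error N n f = (INF p \<in> poly_space n. N (\<lambda>z. f z - p z))"

definition entire_on_disk :: "(complex \<Rightarrow> complex) \<Rightarrow> bool" where
  "entire_on_disk f \<longleftrightarrow> (\<exists>g. g holomorphic_on UNIV \<and> (\<forall>z\<in>ball 0 1. f z = g z))"

end

theory Submission
  imports Defs "HOL-Complex_Analysis.Complex_Analysis"
begin



lemma img01: "(\<lambda>x. x / (2*pi)) ` {0..2*pi} = {0..1::real}"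
proof -
  have "(\<lambda>x. x / (2*pi)) ` {0..2*pi} = (\<lambda>x. (1/(2*pi)) * x + 0) ` {0..2*pi}" by simp
  also have "\<dots> = {0..1}" by (subst image_affinity_atLeastAtMost) auto
  finally show ?thesis .
qed

lemma lint_conv:
  fixes Fu :: "real \<Rightarrow> complex" and Ij :: complex
  assumes "continuous_on {0..2*pi} Fu" "((\<lambda>x. Fu (2*pi*x)) has_integral Ij) {0..1}"
  shows "(LINT t:{0..2*pi}|lborel. Fu t) = 2*pi*Ij"
proof -
  have "(Fu has_integral (2*pi) *\<^sub>R Ij) {0..2*pi}"
    using has_integral_stretch_real_iff[of "2*pi" Fu Ij 0 "2*pi"] assms(2) img01 by simp
  moreover have "(LINT t:{0..2*pi}|lborel. Fu t) = integral {0..2*pi} Fu"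
    by (rule set_borel_integral_eq_integral(2)[OF borel_integrable_atLeastAtMost'[OF assms(1)]])
  ultimately show ?thesis by (simp add: integral_unique scaleR_conv_of_real)
qed

lemma hol_lin: "g holomorphic_on UNIV \<Longrightarrow> (\<lambda>z. g (u*z)) holomorphic_on UNIV"
  using holomorphic_on_compose[of "\<lambda>z. u*z" UNIV g] holomorphic_on_subset
  by (auto simp: o_def intro: holomorphic_intros)

lemma circ_eq: "exp(2 * of_real pi * \<i> * of_real x) = cis (2*pi*x)"
  by (simp add: cis_conv_exp mult.commute mult.left_commute)

lemma cis_pow_inv: "inverse (cis a ^ k) = cis (-(real k*a))"
  using Complex.DeMoivre[of a k] cis_inverse[of "real k * a"] by simp

lemma cis_pow_mult: "cis a ^ k * cis (-(real k * a)) = 1"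
  by (simp add: Complex.DeMoivre cis_mult)

lemma coef_circle:
  fixes h :: "complex \<Rightarrow> complex"
  assumes hol: "h holomorphic_on UNIV" and rho: "(\<rho>::real) > 0"
  shows "((\<lambda>x. h (of_real \<rho> * cis(2*pi*x)) * cis(-(k*(2*pi*x)))) has_integral
           ((deriv^^k) h 0 / fact k * \<rho>^k)) {0..1}"
proof -
  have "((\<lambda>u. h u / (u-0) ^ (Suc k)) has_contour_integral ((2 * pi * \<i>) / (fact k) * (deriv ^^ k) h 0))
           (circlepath 0 \<rho>)"
    by (rule Cauchy_has_contour_integral_higher_derivative_circlepath)
       (use hol rho in \<open>auto intro: holomorphic_on_imp_continuous_on holomorphic_on_subset\<close>)
  hence H: "((\<lambda>x. h (circlepath 0 \<rho> x) / (circlepath 0 \<rho> x - 0) ^ (Suc k) * vector_derivative (circlepath 0 \<rho>) (at x within {0..1}))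
     has_integral ((2 * pi * \<i>) / (fact k) * (deriv ^^ k) h 0)) {0..1}"
    by (simp add: has_contour_integral_def)
  have "((\<lambda>x. (2*pi*\<i>/\<rho>^k) * (h (of_real \<rho> * cis(2*pi*x)) * cis(-(k*(2*pi*x)))))
     has_integral ((2 * pi * \<i>) / (fact k) * (deriv ^^ k) h 0)) {0..1}"
  proof (rule has_integral_spike_finite[OF finite.emptyI _ H])
    fix x :: real assume x: "x \<in> {0..1} - {}"
    have c0: "cis (2*pi*x) \<noteq> 0" by simp
    show "(2*pi*\<i>/\<rho>^k) * (h (of_real \<rho> * cis(2*pi*x)) * cis(-(k*(2*pi*x)))) = h (circlepath 0 \<rho> x) / (circlepath 0 \<rho> x - 0) ^ Suc k * vector_derivative (circlepath 0 \<rho>) (at x within {0..1})"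
    proof -
      have vd: "vector_derivative (circlepath 0 \<rho>) (at x within {0..1}) = 2 * pi * \<i> * \<rho> * exp(2 * of_real pi * \<i> * x)"
        by (rule vector_derivative_circlepath01) (use x in auto)
      have cc: "cis (2*pi*x) ^ k * cis(-(real k * (2*pi*x))) = 1" by (rule cis_pow_mult)
      show ?thesis
      using x rho c0 cc unfolding vd
      by (simp only: circlepath circ_eq) (simp add: 
          field_simps power_mult_distrib cis_pow_mult)
    qed
  qed
  hence "((\<lambda>x. h (of_real \<rho> * cis(2*pi*x)) * cis(-(k*(2*pi*x)))) has_integral
       (((2 * pi * \<i>) / (fact k) * (deriv ^^ k) h 0) / (2*pi*\<i>/\<rho>^k))) {0..1}"
    by (subst (asm) has_integral_mult_right_iff) (use rho in auto)
  moreover have "((2 * pi * \<i>) / (fact k) * (deriv ^^ k) h 0) / (2*pi*\<i>/\<rho>^k) = (deriv^^k) h 0 / fact k * \<rho>^k"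
    using rho by (simp add: field_simps)
  ultimately show ?thesis by simp
qed

lemma cauchy_circle:
  fixes h :: "complex \<Rightarrow> complex"
  assumes hol: "h holomorphic_on UNIV" and rho: "(\<rho>::real) > 0" and R: "R > 1"
  shows "((\<lambda>x. h (of_real R * of_real \<rho> * cis(2*pi*x)) * (of_real R * cis(2*pi*x) / (of_real R * cis(2*pi*x) - 1))) has_integral
           h (of_real \<rho>)) {0..1}"
proof -
  have "((\<lambda>u. h u / (u-of_real \<rho>) ^ (Suc 0)) has_contour_integral ((2 * pi * \<i>) / (fact 0) * (deriv ^^ 0) h (of_real \<rho>)))
           (circlepath 0 (R*\<rho>::real))"
    by (rule Cauchy_has_contour_integral_higher_derivative_circlepath)
       (use hol rho R in \<open>auto intro: holomorphic_on_imp_continuous_on holomorphic_on_subset\<close>)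
  hence H: "((\<lambda>x. h (circlepath 0 (R*\<rho>::real) x) / (circlepath 0 (R*\<rho>::real) x - of_real \<rho>) ^ (Suc 0) * vector_derivative (circlepath 0 (R*\<rho>::real)) (at x within {0..1}))
     has_integral ((2 * pi * \<i>) * h (of_real \<rho>))) {0..1}"
    by (simp add: has_contour_integral_def)
  have "((\<lambda>x. (2*pi*\<i>) * (h (of_real R * of_real \<rho> * cis(2*pi*x)) * (of_real R * cis(2*pi*x) / (of_real R * cis(2*pi*x) - 1))))
     has_integral ((2 * pi * \<i>) * h (of_real \<rho>))) {0..1}"
  proof (rule has_integral_spike_finite[OF finite.emptyI _ H])
    fix x :: real assume x: "x \<in> {0..1} - {}"
    have ne: "of_real R * cis(2*pi*x) - 1 \<noteq> 0"
    proof
      assume "of_real R * cis(2*pi*x) - 1 = 0"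
      hence "cmod (of_real R * cis(2*pi*x)) = 1" by (simp add: right_minus_eq)
      thus False using R by (simp add: norm_mult)
    qed
    have ne2: "of_real (R*\<rho>::real) * cis(2*pi*x) - of_real \<rho> \<noteq> 0"
    proof -
      have "of_real (R*\<rho>::real) * cis(2*pi*x) - of_real \<rho> = of_real \<rho> * (of_real R * cis(2*pi*x) - 1)"
        by (simp add: algebra_simps)
      thus ?thesis using ne rho by simp
    qed
    show "(2*pi*\<i>) * (h (of_real R * of_real \<rho> * cis(2*pi*x)) * (of_real R * cis(2*pi*x) / (of_real R * cis(2*pi*x) - 1))) = h (circlepath 0 (R*\<rho>::real) x) / (circlepath 0 (R*\<rho>::real) x - of_real \<rho>) ^ (Suc 0) * vector_derivative (circlepath 0 (R*\<rho>::real)) (at x within {0..1})"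
    proof -
      have vd: "vector_derivative (circlepath 0 (R*\<rho>::real)) (at x within {0..1}) = 2 * pi * \<i> * (R*\<rho>::real) * exp(2 * of_real pi * \<i> * x)"
        by (rule vector_derivative_circlepath01) (use x in auto)
      show ?thesis
      using x rho ne ne2 unfolding vd
      by (simp only: circlepath circ_eq) (simp add: field_simps)
    qed
  qed
  hence "((\<lambda>x. h (of_real R * of_real \<rho> * cis(2*pi*x)) * (of_real R * cis(2*pi*x) / (of_real R * cis(2*pi*x) - 1))) has_integral
      ((2 * pi * \<i>) * h (of_real \<rho>)) / (2*pi*\<i>)) {0..1}"
    by (subst (asm) has_integral_mult_right_iff) auto
  thus ?thesis by simp
qed



lemma Rcis_ne: assumes "(R::real) > 1" shows "of_real R * cis t - 1 \<noteq> 0"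
proof
  assume "of_real R * cis t - 1 = 0"
  hence "cmod (of_real R * cis t) = 1" by (simp add: right_minus_eq)
  thus False using assms by (simp add: norm_mult)
qed

lemma cont_comp_ent:
  assumes "g holomorphic_on UNIV"
  shows "continuous_on A (\<lambda>t::real. g (w * cis t))"
proof -
  have "continuous_on UNIV g" using assms holomorphic_on_imp_continuous_on by blast
  moreover have "continuous_on A (\<lambda>t::real. w * cis t)" by (intro continuous_intros)
  ultimately show ?thesis
    using continuous_on_compose2[of UNIV g A "\<lambda>t::real. w * cis t"] by auto
qed

lemma coef_lint_ne:
  fixes g :: "complex \<Rightarrow> complex"
  assumes hol: "g holomorphic_on UNIV" and w: "w \<noteq> 0"
  shows "(LINT t:{0..2*pi}|lborel. g (w * cis t) * cis (-(k*t))) = 2*pi * ((deriv^^k) g 0 / fact k * w^k)"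
proof -
  define \<rho> where "\<rho> = cmod w"
  define u where "u = w / of_real \<rho>"
  have rho: "\<rho> > 0" using w by (simp add: \<rho>_def)
  have uw: "u * of_real \<rho> = w" using rho by (simp add: u_def)
  define h where "h = (\<lambda>z. g (u * z))"
  have holh: "h holomorphic_on UNIV" unfolding h_def
    by (rule hol_lin[OF hol])
  have dh: "(deriv^^k) h 0 = u^k * (deriv^^k) g 0"
    unfolding h_def using higher_deriv_compose_linear[OF hol, of UNIV 0 u k] by simp
  have I: "((\<lambda>x. h (of_real \<rho> * cis(2*pi*x)) * cis(-(k*(2*pi*x)))) has_integral
           ((deriv^^k) h 0 / fact k * of_real \<rho>^k)) {0..1}"
    by (rule coef_circle[OF holh rho])
  have "(LINT t:{0..2*pi}|lborel. g (w * cis t) * cis (-(k*t))) = 2*pi*((deriv^^k) h 0 / fact k * of_real \<rho>^k)"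
  proof (rule lint_conv)
    show "continuous_on {0..2*pi} (\<lambda>t. g (w * cis t) * cis (-(k*t)))"
      by (intro continuous_intros cont_comp_ent[OF hol])
    show "((\<lambda>x. g (w * cis (2*pi*x)) * cis (-(k*(2*pi*x)))) has_integral
           ((deriv^^k) h 0 / fact k * of_real \<rho>^k)) {0..1}"
      using I proof -
        have e: "\<And>x. h (of_real \<rho> * x) = g (w * x)" by (simp add: h_def uw[symmetric] mult.assoc)
        show ?thesis using I by (simp only: e)
      qed
  qed
  also have "\<dots> = 2*pi * ((deriv^^k) g 0 / fact k * w^k)"
    by (simp add: dh uw[symmetric] power_mult_distrib)
  finally show ?thesis .
qed

lemma coef_lint:
  fixes g :: "complex \<Rightarrow> complex"
  assumes hol: "g holomorphic_on UNIV"
  shows "(LINT t:{0..2*pi}|lborel. g (w * cis t) * cis (-(k*t))) = 2*pi * ((deriv^^k) g 0 / fact k * w^k)"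
proof (cases "w = 0")
  case False thus ?thesis using coef_lint_ne[OF hol] by blast
next
  case True
  have e: "(LINT t:{0..2*pi}|lborel. (\<lambda>z. g 0) (1 * cis t) * cis (-(k*t))) = 2*pi * ((deriv^^k) (\<lambda>z. g 0) 0 / fact k * 1^k)"
    by (rule coef_lint_ne) auto
  have f: "(\<lambda>t. g (w * cis t) * cis (-(k*t))) = (\<lambda>t. (\<lambda>z. g 0) (1 * cis t) * cis (-(k*t)))"
    using True by simp
  have r: "2*pi * ((deriv^^k) (\<lambda>z. g 0) 0 / fact k * 1^k) = 2*pi * ((deriv^^k) g 0 / fact k * w^k)"
    using True by (cases k) (simp_all only: higher_deriv_const, simp_all)
  show ?thesis using e r True by simp
qed

lemma cauchy_lint:
  fixes g :: "complex \<Rightarrow> complex"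
  assumes hol: "g holomorphic_on UNIV" and R: "R > 1"
  shows "(LINT t:{0..2*pi}|lborel. g (of_real R * z * cis t) * (of_real R * cis t / (of_real R * cis t - 1))) = 2*pi * g z"
proof -
  obtain \<rho> u h where rho: "\<rho> > 0" and uz: "u * of_real \<rho> = z" and holh: "h holomorphic_on UNIV"
    and hg: "\<And>x. h x = g (u * x)" and hr: "h (of_real \<rho>) = g z"
  proof (cases "z = 0")
    case True
    show ?thesis by (rule that[of 1 0 "\<lambda>_. g 0"]) (use True in auto)
  next
    case False
    show ?thesis
      apply (rule that[of "cmod z" "z / of_real (cmod z)" "\<lambda>x. g (z / of_real (cmod z) * x)"])
      using False hol_lin[OF hol, of "z / of_real (cmod z)"] by auto
  qed
  have I: "((\<lambda>x. h (of_real R * of_real \<rho> * cis(2*pi*x)) * (of_real R * cis(2*pi*x) / (of_real R * cis(2*pi*x) - 1))) has_integral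
           h (of_real \<rho>)) {0..1}"
    by (rule cauchy_circle[OF holh rho R])
  show ?thesis
  proof (rule lint_conv)
    show "continuous_on {0..2*pi} (\<lambda>t. g (of_real R * z * cis t) * (of_real R * cis t / (of_real R * cis t - 1)))"
      proof -
      have "continuous_on {0..2*pi} (\<lambda>t. g (of_real R * z * cis t))" by (rule cont_comp_ent[OF hol])
      moreover have "continuous_on {0..2*pi} (\<lambda>t. of_real R * cis t / (of_real R * cis t - 1))"
        by (intro continuous_intros) (use Rcis_ne[OF R] in auto)
      ultimately show ?thesis by (rule continuous_on_mult)
    qed
    show "((\<lambda>x. g (of_real R * z * cis (2*pi*x)) * (of_real R * cis (2*pi*x) / (of_real R * cis (2*pi*x) - 1))) has_integral
           g z) {0..1}"
      proof -
      have e: "\<And>y. h (of_real R * of_real \<rho> * y) = g (of_real R * z * y)"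
        by (simp add: hg uz[symmetric] mult_ac)
      show ?thesis using I by (simp only: e hr)
    qed
  qed
qed




lemma lint_int:
  fixes F :: "real \<Rightarrow> 'b::euclidean_space"
  assumes "continuous_on {a..b} F"
  shows "(LINT t:{a..b}|lborel. F t) = integral {a..b} F"
  by (rule set_borel_integral_eq_integral(2)[OF borel_integrable_atLeastAtMost'[OF assms]])

lemma adm_P1: assumes "admissible_space X N" shows "\<forall>f\<in>X. \<forall>z. z \<notin> ball 0 1 \<longrightarrow> f z = 0"
  by (rule assms[unfolded admissible_space_def, THEN conjunct1])

lemma adm_P2: assumes "admissible_space X N" shows "(\<lambda>z. 0) \<in> X"
  by (rule assms[unfolded admissible_space_def, THEN conjunct2, THEN conjunct1])

lemma adm_P3: assumes "admissible_space X N" shows "\<forall>f\<in>X. \<forall>g\<in>X. (\<lambda>z. f z + g z) \<in> X"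
  by (rule assms[unfolded admissible_space_def, THEN conjunct2, THEN conjunct2, THEN conjunct1])

lemma adm_P4: assumes "admissible_space X N" shows "\<forall>f\<in>X. \<forall>c. (\<lambda>z. c * f z) \<in> X"
  by (rule assms[unfolded admissible_space_def, THEN conjunct2, THEN conjunct2, THEN conjunct2, THEN conjunct1])

lemma adm_P5: assumes "admissible_space X N" shows "\<forall>f\<in>X. N f = 0 \<longleftrightarrow> f = (\<lambda>z. 0)"
  by (rule assms[unfolded admissible_space_def, THEN conjunct2, THEN conjunct2, THEN conjunct2, THEN conjunct2, THEN conjunct1])

lemma adm_P6: assumes "admissible_space X N" shows "\<forall>f\<in>X. \<forall>g\<in>X. N (\<lambda>z. f z + g z) \<le> N f + N g"
  by (rule assms[unfolded admissible_space_def, THEN conjunct2, THEN conjunct2, THEN conjunct2, THEN conjunct2, THEN conjunct2, THEN conjunct1])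

lemma adm_P7: assumes "admissible_space X N" shows "\<forall>f\<in>X. \<forall>c. N (\<lambda>z. c * f z) = cmod c * N f"
  by (rule assms[unfolded admissible_space_def, THEN conjunct2, THEN conjunct2, THEN conjunct2, THEN conjunct2, THEN conjunct2, THEN conjunct2, THEN conjunct1])

lemma adm_P10: assumes "admissible_space X N" shows "\<forall>g. g holomorphic_on UNIV \<longrightarrow> restr g \<in> X"
  by (rule assms[unfolded admissible_space_def, THEN conjunct2, THEN conjunct2, THEN conjunct2, THEN conjunct2, THEN conjunct2, THEN conjunct2, THEN conjunct2, THEN conjunct2, THEN conjunct2, THEN conjunct1])

lemma adm_P11: assumes "admissible_space X N" shows "\<forall>f\<in>X. \<forall>g::real \<Rightarrow> complex. set_integrable lborel {0..2*pi} g \<longrightarrow>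
        (\<lambda>z. (1 / (2*pi)) * (LINT t:{0..2*pi}|lborel. f (z * cis t) * g t)) \<in> X \<and>
        N (\<lambda>z. (1 / (2*pi)) * (LINT t:{0..2*pi}|lborel. f (z * cis t) * g t))
          \<le> (1 / (2*pi)) * (LINT t:{0..2*pi}|lborel. cmod (g t)) * N f"
  by (rule assms[unfolded admissible_space_def, THEN conjunct2, THEN conjunct2, THEN conjunct2, THEN conjunct2, THEN conjunct2, THEN conjunct2, THEN conjunct2, THEN conjunct2, THEN conjunct2, THEN conjunct2])

lemma adm_conv:
  fixes F :: "complex \<Rightarrow> complex" and k :: "real \<Rightarrow> complex"
  assumes adm: "admissible_space X N" and F: "F \<in> X" and k: "continuous_on {0..2*pi} k"
  shows "(\<lambda>z. (1 / (2*pi)) * (LINT t:{0..2*pi}|lborel. F (z * cis t) * k t)) \<in> X"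
    "N (\<lambda>z. (1 / (2*pi)) * (LINT t:{0..2*pi}|lborel. F (z * cis t) * k t))
       \<le> (1 / (2*pi)) * integral {0..2*pi} (\<lambda>t. cmod (k t)) * N F"
proof -
  have si: "set_integrable lborel {0..2*pi} k" by (rule borel_integrable_atLeastAtMost'[OF k])
  have ck: "continuous_on {0..2*pi} (\<lambda>t. cmod (k t))" by (intro continuous_intros k)
  note H = bspec[OF adm_P11[OF adm] F, THEN spec[of _ k], THEN mp, OF si]
  show "(\<lambda>z. (1 / (2*pi)) * (LINT t:{0..2*pi}|lborel. F (z * cis t) * k t)) \<in> X"
    by (rule H[THEN conjunct1])
  show "N (\<lambda>z. (1 / (2*pi)) * (LINT t:{0..2*pi}|lborel. F (z * cis t) * k t))
       \<le> (1 / (2*pi)) * integral {0..2*pi} (\<lambda>t. cmod (k t)) * N F"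
    using H[THEN conjunct2] unfolding lint_int[OF ck] .
qed

lemma adm_zero: "admissible_space X N \<Longrightarrow> (\<lambda>z. 0) \<in> X"
  using adm_P2 by blast

lemma adm_add: "admissible_space X N \<Longrightarrow> f \<in> X \<Longrightarrow> g \<in> X \<Longrightarrow> (\<lambda>z. f z + g z) \<in> X"
  using adm_P3 by blast

lemma adm_cmult: "admissible_space X N \<Longrightarrow> f \<in> X \<Longrightarrow> (\<lambda>z. c * f z) \<in> X"
  using adm_P4 by blast

lemma adm_Ncmult: "admissible_space X N \<Longrightarrow> f \<in> X \<Longrightarrow> N (\<lambda>z. c * f z) = cmod c * N f"
  using adm_P7 by blast

lemma adm_tri: "admissible_space X N \<Longrightarrow> f \<in> X \<Longrightarrow> g \<in> X \<Longrightarrow> N (\<lambda>z. f z + g z) \<le> N f + N g"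
  using adm_P6 by blast

lemma adm_N0: "admissible_space X N \<Longrightarrow> f \<in> X \<Longrightarrow> N f = 0 \<longleftrightarrow> f = (\<lambda>z. 0)"
  using adm_P5 by blast

lemma adm_ent: "admissible_space X N \<Longrightarrow> g holomorphic_on UNIV \<Longrightarrow> restr g \<in> X"
  using adm_P10 by blast

lemma adm_out: "admissible_space X N \<Longrightarrow> f \<in> X \<Longrightarrow> z \<notin> ball 0 1 \<Longrightarrow> f z = 0"
  using adm_P1 by blast

lemma adm_diff: "admissible_space X N \<Longrightarrow> f \<in> X \<Longrightarrow> g \<in> X \<Longrightarrow> (\<lambda>z. f z - g z) \<in> X"
  using adm_add[of X N f "\<lambda>z. (-1) * g z"] adm_cmult[of X N g "-1"] by simp

lemma adm_Nneg: assumes "admissible_space X N" "f \<in> X" shows "N f \<ge> 0"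
proof -
  have "N (\<lambda>z. f z + (-1) * f z) \<le> N f + N (\<lambda>z. (-1) * f z)"
    using adm_tri[OF assms(1,2) adm_cmult[OF assms]] .
  moreover have "N (\<lambda>z. f z + (-1) * f z) = 0" using adm_N0[OF assms(1) adm_zero[OF assms(1)]] by simp
  moreover have "N (\<lambda>z. (-1) * f z) = N f" using adm_Ncmult[OF assms, of "-1"] by simp
  ultimately show ?thesis by simp
qed

lemma adm_Nsym: assumes "admissible_space X N" "f \<in> X" "g \<in> X"
  shows "N (\<lambda>z. f z - g z) = N (\<lambda>z. g z - f z)"
proof -
  have "N (\<lambda>z. (-1) * (g z - f z)) = N (\<lambda>z. g z - f z)"
    using adm_Ncmult[OF assms(1) adm_diff[OF assms(1,3,2)], of "-1"] by simp
  thus ?thesis by (simp add: algebra_simps)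
qed

lemma adm_tri_diff: assumes "admissible_space X N" "a \<in> X" "b \<in> X" "c \<in> X"
  shows "N (\<lambda>z. a z - b z) \<le> N (\<lambda>z. a z - c z) + N (\<lambda>z. c z - b z)"
proof -
  have "N (\<lambda>z. (a z - c z) + (c z - b z)) \<le> N (\<lambda>z. a z - c z) + N (\<lambda>z. c z - b z)"
    using adm_tri[OF assms(1) adm_diff[OF assms(1,2,4)] adm_diff[OF assms(1,4,3)]] .
  thus ?thesis by simp
qed

lemma mono_in: "admissible_space X N \<Longrightarrow> mono_fn n \<in> X"
  unfolding mono_fn_def by (rule adm_ent) (auto intro: holomorphic_intros)

lemma mono_pos: assumes "admissible_space X N" shows "N (mono_fn n) > 0"
proof -
  have "mono_fn n \<noteq> (\<lambda>z. 0)"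
  proof
    assume "mono_fn n = (\<lambda>z. 0)"
    hence "mono_fn n (1/2) = 0" by simp
    thus False by (simp add: mono_fn_def restr_def)
  qed
  hence "N (mono_fn n) \<noteq> 0" using adm_N0[OF assms mono_in[OF assms, of n]] by simp
  thus ?thesis using adm_Nneg[OF assms mono_in[OF assms, of n]] by simp
qed

lemma int_cis_norm: "integral {0..2*pi} (\<lambda>t. cmod (cis (-(real k * t)))) = 2*pi"
  by simp

lemma coef_bound:
  assumes adm: "admissible_space X N" and hol: "h holomorphic_on UNIV"
  shows "cmod ((deriv^^k) h 0 / fact k) * N (mono_fn k) \<le> N (restr h)"
proof -
  define c where "c = (deriv^^k) h 0 / fact k"
  have hX: "restr h \<in> X" by (rule adm_ent[OF adm hol])
  have kc: "continuous_on {0..2*pi} (\<lambda>t. cis (-(real k * t)))" by (intro continuous_intros)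
  have eq: "(\<lambda>z. (1 / (2*pi)) * (LINT t:{0..2*pi}|lborel. restr h (z * cis t) * cis (-(real k * t))))
      = (\<lambda>z. c * mono_fn k z)"
  proof
    fix z :: complex
    show "(1 / (2*pi)) * (LINT t:{0..2*pi}|lborel. restr h (z * cis t) * cis (-(real k * t))) = c * mono_fn k z"
    proof (cases "z \<in> ball 0 1")
      case True
      hence "(\<lambda>t. restr h (z * cis t) * cis (-(real k * t))) = (\<lambda>t. h (z * cis t) * cis (-(real k * t)))"
        by (auto simp: restr_def norm_mult)
      thus ?thesis using True coef_lint[OF hol, of z k]
        by (simp add: c_def mono_fn_def restr_def)
    next
      case False
      hence "(\<lambda>t. restr h (z * cis t) * cis (-(real k * t))) = (\<lambda>t. 0)"
        by (auto simp: restr_def norm_mult)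
      thus ?thesis using False by (simp add: mono_fn_def restr_def)
    qed
  qed
  have "N (\<lambda>z. c * mono_fn k z) \<le> (1 / (2*pi)) * integral {0..2*pi} (\<lambda>t. cmod (cis (-(real k * t)))) * N (restr h)"
    using adm_conv(2)[OF adm hX kc] unfolding eq .
  also have "\<dots> = N (restr h)" by (simp only: int_cis_norm) simp
  finally show ?thesis using adm_Ncmult[OF adm mono_in[OF adm], of c k] by (simp add: c_def)
qed




lemma alg_kernel:
  fixes R :: real and t :: real
  assumes R: "R > 1"
  shows "(cis(-t)/of_real R)^n * (of_real R * cis t / (of_real R * cis t - 1))
       = of_real R * cis t / (of_real R * cis t - 1) - (\<Sum>k<n. (1/of_real R)^k * cis(-(real k * t)))"
proof -
  define x where "x = cis(-t)/of_real R"
  have x1: "x \<noteq> 1"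
  proof
    assume "x = 1" hence "cmod x = 1" by simp
    thus False using R by (simp add: x_def norm_divide)
  qed
  have ne: "of_real R * cis t - 1 \<noteq> 0" by (rule Rcis_ne[OF R])
  have K: "of_real R * cis t / (of_real R * cis t - 1) = 1 / (1 - x)"
  proof -
    have "of_real R * cis t * (1 - x) = of_real R * cis t - 1"
      using R by (simp add: x_def algebra_simps cis_mult)
    thus ?thesis using ne x1 by (simp add: field_simps)
  qed
  have S: "(\<Sum>k<n. (1/of_real R)^k * cis(-(real k * t))) = (\<Sum>k<n. x^k)"
    by (simp add: x_def power_divide Complex.DeMoivre field_simps)
  show ?thesis unfolding S K x_def[symmetric] sum_gp_strict using x1
    by (simp add: field_simps)
qed

lemma K_norm:
  fixes R :: real assumes R: "R > 1"
  shows "cmod (of_real R * cis t / (of_real R * cis t - 1)) \<le> R / (R - 1)"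
proof -
  have "R - 1 \<le> cmod (of_real R * cis t - 1)"
    using norm_triangle_ineq2[of "of_real R * cis t" 1] R by (simp add: norm_mult)
  moreover have "cmod (of_real R * cis t) = R" using R by (simp add: norm_mult)
  ultimately have a: "R - 1 \<le> cmod (of_real R * cis t - 1)" "0 < (R - 1) * cmod (of_real R * cis t - 1)"
    using R by (auto intro!: mult_pos_pos)
  have "R / cmod (of_real R * cis t - 1) \<le> R / (R - 1)"
    by (rule divide_left_mono[OF a(1) _ ]) (use R a(2) in \<open>auto simp: mult.commute\<close>)
  thus ?thesis by (simp add: norm_divide \<open>cmod (of_real R * cis t) = R\<close> R)
qed

lemma best_le:
  assumes adm: "admissible_space X N" and fX: "f \<in> X" and q: "degree q < n"
  shows "best_approx_error N n f \<le> N (\<lambda>z. f z - restr (poly q) z)"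
proof -
  have qX: "restr (poly q) \<in> X" by (rule adm_ent[OF adm]) (auto intro: holomorphic_intros)
  have mem: "restr (poly q) \<in> poly_space n" using q by (auto simp: poly_space_def)
  have bdd: "bdd_below ((\<lambda>p. N (\<lambda>z. f z - p z)) ` poly_space n)"
  proof (rule bdd_belowI[of _ 0])
    fix y assume "y \<in> (\<lambda>p. N (\<lambda>z. f z - p z)) ` poly_space n"
    then obtain q' where "y = N (\<lambda>z. f z - restr (poly q') z)" by (auto simp: poly_space_def)
    moreover have "restr (poly q') \<in> X" by (rule adm_ent[OF adm]) (auto intro: holomorphic_intros)
    ultimately show "0 \<le> y" using adm_Nneg[OF adm adm_diff[OF adm fX]] by simp
  qed
  show ?thesis unfolding best_approx_error_def
    by (rule cINF_lower[OF bdd mem])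
qed

lemma best_nonneg:
  assumes adm: "admissible_space X N" and fX: "f \<in> X" and n: "n \<ge> 1"
  shows "best_approx_error N n f \<ge> 0"
proof -
  have ne: "poly_space n \<noteq> {}" using n by (auto simp: poly_space_def intro!: exI[of _ 0])
  show ?thesis unfolding best_approx_error_def
  proof (rule cINF_greatest[OF ne])
    fix p assume "p \<in> poly_space n"
    then obtain q' where "p = restr (poly q')" by (auto simp: poly_space_def)
    moreover have "restr (poly q') \<in> X" by (rule adm_ent[OF adm]) (auto intro: holomorphic_intros)
    ultimately show "0 \<le> N (\<lambda>z. f z - p z)" using adm_Nneg[OF adm adm_diff[OF adm fX]] by simp
  qed
qed

lemma part1_bound:
  assumes adm: "admissible_space X N" and fX: "f \<in> X" and hol: "g holomorphic_on UNIV"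
    and fg: "\<And>z. z \<in> ball 0 1 \<Longrightarrow> f z = g z" and R: "R > 1" and n: "n \<ge> 1"
  shows "best_approx_error N n f \<le> (R / (R - 1) * N (restr (\<lambda>w. g (of_real R * w)))) * (1/R)^n"
proof -
  define G where "G = restr (\<lambda>w. g (of_real R * w))"
  have GX: "G \<in> X" unfolding G_def by (rule adm_ent[OF adm hol_lin[OF hol]])
  define K where "K = (\<lambda>t::real. of_real R * cis t / (of_real R * cis t - 1))"
  define D where "D = (\<lambda>t::real. (cis(-t)/of_real R)^n * K t)"
  define c where "c = (\<lambda>k. (deriv^^k) g 0 / fact k)"
  define q where "q = (\<Sum>k<n. monom (c k) k)"
  have degq: "degree q < n"
  proof -
    have "degree q \<le> n - 1" unfolding q_def
      by (rule degree_sum_le) (auto intro: order.trans[OF degree_monom_le])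
    thus ?thesis using n by simp
  qed
  have polyq: "poly q z = (\<Sum>k<n. c k * z^k)" for z
    by (simp add: q_def poly_sum poly_monom)
  have Kc: "continuous_on {0..2*pi} K" unfolding K_def
    by (intro continuous_intros) (use Rcis_ne[OF R] in auto)
  have Dc: "continuous_on {0..2*pi} D" unfolding D_def by (intro continuous_intros Kc) (use R in auto)
  have eq: "(\<lambda>z. (1 / (2*pi)) * (LINT t:{0..2*pi}|lborel. G (z * cis t) * D t)) = (\<lambda>z. f z - restr (poly q) z)"
  proof
    fix z :: complex
    show "(1 / (2*pi)) * (LINT t:{0..2*pi}|lborel. G (z * cis t) * D t) = f z - restr (poly q) z"
    proof (cases "z \<in> ball 0 1")
      case False
      hence "(\<lambda>t. G (z * cis t) * D t) = (\<lambda>t. 0)" by (auto simp: G_def restr_def norm_mult)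
      thus ?thesis using False adm_out[OF adm fX False] by (simp add: restr_def)
    next
      case True
      define \<phi> where "\<phi> = (\<lambda>t. g (of_real R * z * cis t))"
      have \<phi>c: "continuous_on {0..2*pi} \<phi>" unfolding \<phi>_def by (rule cont_comp_ent[OF hol])
      have e1: "(\<lambda>t. G (z * cis t) * D t) = (\<lambda>t. \<phi> t * K t - (\<Sum>k<n. (1/of_real R)^k * (\<phi> t * cis(-(real k * t)))))"
      proof
        fix t
        have "G (z * cis t) = \<phi> t" using True by (simp add: G_def restr_def \<phi>_def norm_mult mult.assoc)
        thus "G (z * cis t) * D t = \<phi> t * K t - (\<Sum>k<n. (1/of_real R)^k * (\<phi> t * cis(-(real k * t))))"
          unfolding D_def K_def alg_kernel[OF R]
          by (simp add: algebra_simps sum_distrib_left)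
      qed
      have i1: "(\<lambda>t. \<phi> t * K t) integrable_on {0..2*pi}"
        by (intro integrable_continuous_interval continuous_intros \<phi>c Kc)
      have i2: "(\<lambda>t. (1/of_real R)^k * (\<phi> t * cis(-(real k * t)))) integrable_on {0..2*pi}" for k
        by (intro integrable_continuous_interval continuous_intros \<phi>c)
      have cK: "integral {0..2*pi} (\<lambda>t. \<phi> t * K t) = 2*pi * g z"
      proof -
        have cc: "continuous_on {0..2*pi} (\<lambda>t. \<phi> t * K t)" by (intro continuous_intros \<phi>c Kc)
        have A: "(LINT t:{0..2*pi}|lborel. \<phi> t * K t) = 2*pi * g z"
          using cauchy_lint[OF hol R, of z] unfolding \<phi>_def K_def .
        show ?thesis using A lint_int[OF cc] by metis
      qed
      have cP: "(1/of_real R)^k * integral {0..2*pi} (\<lambda>t. \<phi> t * cis(-(real k * t))) = 2*pi * (c k * z^k)" for k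
      proof -
        have cc: "continuous_on {0..2*pi} (\<lambda>t. \<phi> t * cis(-(real k * t)))" by (intro continuous_intros \<phi>c)
        have "integral {0..2*pi} (\<lambda>t. \<phi> t * cis(-(real k * t))) = 2*pi * (c k * (of_real R * z)^k)"
          using coef_lint[OF hol, of "of_real R * z" k] lint_int[OF cc] by (simp add: \<phi>_def c_def)
        thus ?thesis using R by (simp add: power_mult_distrib field_simps)
      qed
      have "(LINT t:{0..2*pi}|lborel. G (z * cis t) * D t) = integral {0..2*pi} (\<lambda>t. G (z * cis t) * D t)"
        by (rule lint_int) (unfold e1, intro continuous_intros \<phi>c Kc)
      also have "\<dots> = 2*pi * g z - (\<Sum>k<n. 2*pi * (c k * z^k))"
        unfolding e1 by (subst integral_diff[OF i1]) (auto intro: integrable_sum i2 simp: integral_sum[OF _ i2] cK cP)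
      also have "\<dots> = 2*pi * (g z - poly q z)"
        by (simp add: polyq sum_distrib_left right_diff_distrib)
      finally show ?thesis using True fg[OF True] by (simp add: restr_def)
    qed
  qed
  have intD: "integral {0..2*pi} (\<lambda>t. cmod (D t)) \<le> 2*pi * ((1/R)^n * (R/(R-1)))"
  proof -
    have "integral {0..2*pi} (\<lambda>t. cmod (D t)) \<le> integral {0..2*pi} (\<lambda>t. (1/R)^n * (R/(R-1)))"
    proof (rule integral_le)
      show "(\<lambda>t. cmod (D t)) integrable_on {0..2*pi}"
        by (intro integrable_continuous_interval continuous_intros Dc)
      fix t :: real
      have "cmod (D t) = (1/R)^n * cmod (K t)" using R
        by (simp add: D_def norm_mult norm_power norm_divide)
      also have "\<dots> \<le> (1/R)^n * (R/(R-1))" unfolding K_def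
        by (rule mult_left_mono[OF K_norm[OF R]]) (use R in simp)
      finally show "cmod (D t) \<le> (1/R)^n * (R/(R-1))" .
    qed (rule integrable_const_ivl)
    also have "integral {0..2*pi} (\<lambda>t. (1/R)^n * (R/(R-1))) = 2*pi * ((1/R)^n * (R/(R-1)))"
      by (simp add: integral_const_real)
    finally show ?thesis .
  qed
  have "best_approx_error N n f \<le> N (\<lambda>z. f z - restr (poly q) z)" by (rule best_le[OF adm fX degq])
  also have "\<dots> \<le> (1 / (2*pi)) * integral {0..2*pi} (\<lambda>t. cmod (D t)) * N G"
    using adm_conv(2)[OF adm GX Dc] unfolding eq .
  also have "\<dots> \<le> (1 / (2*pi)) * (2*pi * ((1/R)^n * (R/(R-1)))) * N G"
    by (intro mult_right_mono mult_left_mono intD adm_Nneg[OF adm GX]) auto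
  finally show ?thesis by (simp add: G_def field_simps)
qed




lemma root_pow:
  fixes a :: real
  assumes "a \<ge> 0" "n > 0"
  shows "(a powr (1/real n))^n = a"
proof (cases "a = 0")
  case True thus ?thesis using assms by simp
next
  case False
  hence a: "a > 0" using assms by simp
  have "(a powr (1/real n))^n = (a powr (1/real n)) powr (real n)"
    by (rule powr_realpow[symmetric]) (use a in simp)
  also have "\<dots> = a" using assms by (simp add: powr_powr)
  finally show ?thesis .
qed

lemma ev_lower:
  fixes a :: "nat \<Rightarrow> real"
  assumes lim: "ereal m < liminf (\<lambda>n. ereal (a n powr (1/real n)))" and m: "m \<ge> 0"
    and a: "\<And>n. a n \<ge> 0"
  shows "eventually (\<lambda>n. m^n < a n) sequentially"
proof -
  have "eventually (\<lambda>n. ereal m < ereal (a n powr (1/real n))) sequentially"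
    by (rule less_LiminfD[OF lim])
  moreover have "eventually (\<lambda>n. n \<ge> 1) sequentially" by (rule eventually_ge_at_top)
  ultimately show ?thesis
  proof eventually_elim
    case (elim n)
    hence "m^n < (a n powr (1/real n))^n"
      by (intro power_strict_mono) (use m in auto)
    thus ?case using root_pow[of "a n" n] a elim by simp
  qed
qed

lemma powr_root_le:
  fixes a C x :: real
  assumes "0 \<le> a" "a \<le> C * x^n" "x \<ge> 0" "C \<ge> 0" "n > 0"
  shows "a powr (1/real n) \<le> C powr (1/real n) * x"
proof -
  have "a powr (1/real n) \<le> (C * x^n) powr (1/real n)"
    by (rule powr_mono2) (use assms in auto)
  also have "\<dots> = C powr (1/real n) * (x^n) powr (1/real n)" by (simp add: powr_mult assms)
  also have "(x^n) powr (1/real n) = x"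
  proof (cases "x = 0")
    case True thus ?thesis using assms by simp
  next
    case False
    hence "x^n = x powr real n" using assms by (simp add: powr_realpow)
    thus ?thesis using assms False by (simp add: powr_powr)
  qed
  finally show ?thesis .
qed

lemma root_tendsto_zeroI:
  fixes a :: "nat \<Rightarrow> real"
  assumes nn: "eventually (\<lambda>n. a n \<ge> 0) sequentially"
    and bnd: "\<And>x. x > 0 \<Longrightarrow> \<exists>C\<ge>0. eventually (\<lambda>n. a n \<le> C * x^n) sequentially"
  shows "(\<lambda>n. a n powr (1/real n)) \<longlonglongrightarrow> 0"
proof (rule order_tendstoI)
  fix b :: real assume "b < 0"
  thus "eventually (\<lambda>n. b < a n powr (1/real n)) sequentially"
    using powr_ge_zero by (intro always_eventually allI) (metis less_le_trans)
next
  fix b :: real assume b: "0 < b"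
  obtain C where C: "C \<ge> 0" and ev: "eventually (\<lambda>n. a n \<le> C * (b/3)^n) sequentially"
    using bnd[of "b/3"] b by auto
  define C' where "C' = C + 1"
  have C': "C' > 0" using C by (simp add: C'_def)
  have "(\<lambda>n. C' powr (1/real n)) \<longlonglongrightarrow> C' powr 0"
    by (intro tendsto_powr tendsto_const) (use C' in \<open>auto intro: lim_1_over_n\<close>)
  hence "eventually (\<lambda>n. C' powr (1/real n) < 2) sequentially"
    using C' by (intro order_tendstoD) auto
  moreover have "eventually (\<lambda>n. n \<ge> 1) sequentially" by (rule eventually_ge_at_top)
  ultimately show "eventually (\<lambda>n. a n powr (1/real n) < b) sequentially"
    using ev nn
  proof eventually_elim
    case (elim n)
    have "C * (b/3)^n \<le> C' * (b/3)^n" by (rule mult_right_mono) (use b in \<open>simp_all add: C'_def\<close>)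
    hence "a n \<le> C' * (b/3)^n" using elim(3) by linarith
    hence "a n powr (1/real n) \<le> C' powr (1/real n) * (b/3)"
      by (intro powr_root_le) (use elim C' b in auto)
    also have "\<dots> < 2 * (b/3) + b/3"
      using mult_strict_right_mono[OF elim(1), of "b/3"] b by simp
    finally show ?case by simp
  qed
qed

lemma root_tendsto_zeroD:
  fixes a :: "nat \<Rightarrow> real"
  assumes lim: "(\<lambda>n. a n powr (1/real n)) \<longlonglongrightarrow> 0"
    and nn: "eventually (\<lambda>n. a n \<ge> 0) sequentially" and x: "x > 0"
  shows "eventually (\<lambda>n. a n \<le> x^n) sequentially"
proof -
  have "eventually (\<lambda>n. a n powr (1/real n) < x) sequentially"
    using lim x by (intro order_tendstoD) auto
  moreover have "eventually (\<lambda>n. n \<ge> 1) sequentially" by (rule eventually_ge_at_top)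
  ultimately show ?thesis using nn
  proof eventually_elim
    case (elim n)
    hence "(a n powr (1/real n))^n \<le> x^n"
      by (intro power_mono) auto
    thus ?case using root_pow[of "a n" n] elim by simp
  qed
qed

lemma radius_inf:
  fixes f :: "nat \<Rightarrow> complex"
  assumes "\<And>\<rho>. \<rho> > 0 \<Longrightarrow> \<exists>C. eventually (\<lambda>n. cmod (f n) * \<rho>^n \<le> C * (1/2)^n) sequentially"
  shows "conv_radius f = \<infinity>"
proof (rule conv_radius_inftyI'')
  fix z :: complex
  obtain C where C: "eventually (\<lambda>n. cmod (f n) * (cmod z + 1)^n \<le> C * (1/2)^n) sequentially"
    using assms[of "cmod z + 1"] by (smt (verit) norm_ge_zero)
  show "summable (\<lambda>n. f n * z^n)"
  proof (rule summable_comparison_test_ev[OF _ summable_mult[OF summable_geometric[of "1/2::real"]]])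
    show "eventually (\<lambda>n. norm (f n * z^n) \<le> C * (1/2)^n) sequentially"
      using C
    proof eventually_elim
      case (elim n)
      have "norm (f n * z^n) = cmod (f n) * cmod z ^ n" by (simp add: norm_mult norm_power)
      also have "\<dots> \<le> cmod (f n) * (cmod z + 1)^n"
        by (intro mult_left_mono power_mono) auto
      finally show ?case using elim by simp
    qed
  qed simp
qed




lemma entire_coeffs:
  fixes c :: "nat \<Rightarrow> complex"
  assumes rad: "conv_radius c = \<infinity>"
  shows "eval_fps (Abs_fps c) holomorphic_on UNIV"
    "\<And>n. (deriv^^n) (eval_fps (Abs_fps c)) 0 / fact n = c n"
    "\<And>z. (\<lambda>n. c n * z^n) sums eval_fps (Abs_fps c) z"
proof -
  have r: "fps_conv_radius (Abs_fps c) = \<infinity>" using rad by (simp add: fps_conv_radius_def)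
  show "eval_fps (Abs_fps c) holomorphic_on UNIV"
    by (rule holomorphic_on_eval_fps) (simp add: r)
  show "(deriv^^n) (eval_fps (Abs_fps c)) 0 / fact n = c n" for n
    using fps_nth_conv_deriv[of "Abs_fps c" n] r by simp
  show "(\<lambda>n. c n * z^n) sums eval_fps (Abs_fps c) z" for z
    using sums_eval_fps[of z "Abs_fps c"] r by simp
qed

lemma part1:
  assumes adm: "admissible_space X N" and fX: "f \<in> X"
    and mu1: "liminf (\<lambda>n. ereal (N (mono_fn n) powr (1 / real n))) > 0"
    and ent: "entire_on_disk f"
  shows "(\<lambda>n. (best_approx_error N n f / N (mono_fn n)) powr (1 / real n)) \<longlonglongrightarrow> 0"
proof -
  obtain g where hol: "g holomorphic_on UNIV" and fg: "\<And>z. z \<in> ball 0 1 \<Longrightarrow> f z = g z"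
    using ent unfolding entire_on_disk_def by blast
  obtain m where m0: "ereal 0 < ereal m" and mlt: "ereal m < liminf (\<lambda>n. ereal (N (mono_fn n) powr (1 / real n)))"
    using ereal_dense2[OF mu1[unfolded zero_ereal_def]] by blast
  have m: "m > 0" using m0 by simp
  have Npos: "\<And>n. N (mono_fn n) > 0" by (rule mono_pos[OF adm])
  have evm: "eventually (\<lambda>n. m^n < N (mono_fn n)) sequentially"
    by (rule ev_lower[OF mlt]) (use m Npos in \<open>auto intro: less_imp_le\<close>)
  show ?thesis
  proof (rule root_tendsto_zeroI)
    show "eventually (\<lambda>n. best_approx_error N n f / N (mono_fn n) \<ge> 0) sequentially"
      using eventually_ge_at_top[of 1]
      by eventually_elim (use best_nonneg[OF adm fX] Npos in \<open>auto intro!: divide_nonneg_pos\<close>)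
  next
    fix x :: real assume x: "x > 0"
    define R where "R = 1 + 1 / (x * m)"
    have R: "R > 1" using x m by (simp add: R_def)
    define C where "C = R / (R - 1) * N (restr (\<lambda>w. g (of_real R * w)))"
    have C: "C \<ge> 0" unfolding C_def using R
      by (intro mult_nonneg_nonneg adm_Nneg[OF adm] adm_ent[OF adm] hol_lin[OF hol]) auto
    have Rm: "R * m = m + 1/x" using x m by (simp add: R_def field_simps)
    have Rmp: "R * m > 0" using R m by simp
    have "1 \<le> x * (R * m)" unfolding Rm using x m by (simp add: field_simps)
    hence xr: "1 / (R * m) \<le> x" using Rmp by (simp add: pos_divide_le_eq)
    have "eventually (\<lambda>n. best_approx_error N n f / N (mono_fn n) \<le> C * x^n) sequentially"
      using evm eventually_ge_at_top[of 1]
    proof eventually_elim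
      case (elim n)
      have E: "best_approx_error N n f \<le> C * (1/R)^n"
        unfolding C_def by (rule part1_bound[OF adm fX hol fg R elim(2)])
      have "best_approx_error N n f / N (mono_fn n) \<le> C * (1/R)^n / N (mono_fn n)"
        by (rule divide_right_mono[OF E]) (use Npos in \<open>auto intro: less_imp_le\<close>)
      also have "\<dots> \<le> C * (1/R)^n / m^n"
        by (rule divide_left_mono) (use C R m elim Npos in auto)
      also have "\<dots> = C * (1/(R*m))^n" by (simp add: power_divide power_mult_distrib)
      also have "\<dots> \<le> C * x^n"
        by (intro mult_left_mono power_mono xr C) (use R m in simp)
      finally show ?case .
    qed
    thus "\<exists>C\<ge>0. eventually (\<lambda>n. best_approx_error N n f / N (mono_fn n) \<le> C * x^n) sequentially"
      using C by blast
  qed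
qed




lemma UB:
  assumes adm: "admissible_space X N"
  shows "\<exists>B>0. \<forall>n\<ge>1. N (mono_fn n) \<le> B^n"
proof -
  define M where "M = (\<lambda>k. N (mono_fn k) powr (1/real k))"
  define T where "T = (\<lambda>n. Max (insert 1 (M ` {1..n})))"
  have Npos: "\<And>n. N (mono_fn n) > 0" by (rule mono_pos[OF adm])
  have T1: "T n \<ge> 1" for n unfolding T_def by (rule Max_ge) auto
  have MT: "M k \<le> T n" if "1 \<le> k" "k \<le> n" for k n unfolding T_def by (rule Max_ge) (use that in auto)
  have Tmono: "T n \<le> T n'" if "n \<le> n'" for n n' unfolding T_def
    by (rule Max_mono) (use that in auto)
  have NM: "N (mono_fn k) = M k ^ k" if "k \<ge> 1" for k
    using root_pow[of "N (mono_fn k)" k] Npos[of k] that by (simp add: M_def)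
  have M0: "M k \<ge> 0" for k by (simp add: M_def)
  show ?thesis
  proof (cases "\<exists>B. \<forall>n. T n \<le> B")
    case True
    then obtain B where B: "\<And>n. T n \<le> B" by blast
    have B1: "B \<ge> 1" using T1[of 0] B[of 0] by simp
    show ?thesis
    proof (intro exI[of _ B] conjI allI impI)
      show "B > 0" using B1 by simp
      fix n :: nat assume n: "n \<ge> 1"
      have "M n ^ n \<le> B ^ n"
        by (rule power_mono) (use MT[of n n] B[of n] n M0 in auto)
      thus "N (mono_fn n) \<le> B^n" using NM[OF n] by simp
    qed
  next
    case False
    hence unb: "\<And>B. \<exists>n. T n > B" by (meson not_le)
    have evT: "eventually (\<lambda>n. T n > B) sequentially" for B
    proof -
      obtain n0 where "T n0 > B" using unb by blast
      thus ?thesis unfolding eventually_at_top_linorder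
        by (intro exI[of _ n0] allI impI) (meson Tmono less_le_trans)
    qed
    define a where "a = (\<lambda>n. (1 / sqrt (T n))^n)"
    have a0: "a n \<ge> 0" for n using T1[of n] by (simp add: a_def)
    define c where "c = (\<lambda>n. complex_of_real (a n))"
    have rad: "conv_radius c = \<infinity>"
    proof (rule radius_inf)
      fix \<rho> :: real assume \<rho>: "\<rho> > 0"
      have "eventually (\<lambda>n. cmod (c n) * \<rho>^n \<le> 1 * (1/2)^n) sequentially"
        using evT[of "(2*\<rho>)^2"]
      proof eventually_elim
        case (elim n)
        have sT: "sqrt (T n) > 2 * \<rho>" using elim \<rho> real_less_rsqrt by blast
        have sp: "sqrt (T n) > 0" using T1[of n] by simp
        have cn: "cmod (c n) = a n" unfolding c_def norm_of_real using a0[of n] by simp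
        have "cmod (c n) * \<rho>^n = (\<rho> / sqrt (T n))^n"
          unfolding cn by (simp add: a_def power_divide)
        also have "\<dots> \<le> (1/2)^n"
          by (rule power_mono) (use sT sp \<rho> in \<open>auto simp: divide_simps\<close>)
        finally show ?case by simp
      qed
      thus "\<exists>C. eventually (\<lambda>n. cmod (c n) * \<rho>^n \<le> C * (1/2)^n) sequentially" by blast
    qed
    note ec = entire_coeffs[OF rad]
    define H where "H = N (restr (eval_fps (Abs_fps c)))"
    have cb: "cmod (c k) * N (mono_fn k) \<le> H" for k
      using coef_bound[OF adm ec(1), of k] unfolding ec(2) H_def .
    have H0: "H \<ge> 0" unfolding H_def by (rule adm_Nneg[OF adm adm_ent[OF adm ec(1)]])
    obtain n where Tn: "T n > max 1 (H^2)" using unb by blast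
    have "T n \<in> insert 1 (M ` {1..n})" unfolding T_def by (rule Max_in) auto
    with Tn obtain k where k: "k \<in> {1..n}" "M k = T n" by auto
    have Tk: "T k = T n" using Tmono[of k n] MT[of k k] k by auto
    define \<tau> where "\<tau> = T n"
    have tau1: "\<tau> > 1" "\<tau> > H^2" using Tn by (auto simp: \<tau>_def)
    have st: "sqrt \<tau> > H" using tau1 real_less_rsqrt by blast
    have st1: "sqrt \<tau> \<ge> 1" using tau1 by simp
    have "cmod (c k) * N (mono_fn k) = (1 / sqrt \<tau>)^k * \<tau>^k"
    proof -
      have cn: "cmod (c k) = a k" unfolding c_def norm_of_real using a0[of k] by simp
      show ?thesis unfolding cn using k Tk NM[of k] by (simp add: a_def \<tau>_def)
    qed
    also have "\<dots> = sqrt \<tau> ^ k"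
    proof -
      have "(1 / sqrt \<tau>) * \<tau> = sqrt \<tau>" using tau1
        by (metis less_trans zero_less_one less_imp_le divide_eq_eq mult.commute real_div_sqrt times_divide_eq_left mult_1)
      thus ?thesis by (metis power_mult_distrib)
    qed
    also have "\<dots> \<ge> sqrt \<tau> ^ 1" by (rule power_increasing) (use k st1 in auto)
    finally have "H \<ge> sqrt \<tau>" using cb[of k] by simp
    thus ?thesis using st by simp
  qed
qed




lemma poly_coef: "(deriv^^k) (poly q) 0 / fact k = coeff (q::complex poly) (k::nat)"
proof -
  have "fps_nth (fps_of_poly q) k = (deriv ^^ k) (eval_fps (fps_of_poly q)) 0 / fact k"
    by (rule fps_nth_conv_deriv) simp
  moreover have "eval_fps (fps_of_poly q) = poly q" by (rule ext) simp
  ultimately show ?thesis by simp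
qed

lemma poly_sums: "(\<lambda>n. coeff q n * z^n) sums poly q (z::complex)"
  using sums_eval_fps[of z "fps_of_poly q"] by simp

lemma ev_shift1: "eventually P sequentially \<Longrightarrow> eventually (\<lambda>i. P (Suc i)) sequentially"
  by simp

lemma part2_diff:
  assumes adm: "admissible_space X N" and fX: "f \<in> X"
  shows "N (restr (poly (p2 - p1))) \<le> N (\<lambda>z. f z - restr (poly p1) z) + N (\<lambda>z. f z - restr (poly p2) z)"
proof -
  have P1: "restr (poly p1) \<in> X" by (rule adm_ent[OF adm]) (auto intro: holomorphic_intros)
  have P2: "restr (poly p2) \<in> X" by (rule adm_ent[OF adm]) (auto intro: holomorphic_intros)
  define A where "A = (\<lambda>z. f z - restr (poly p1) z)"
  define B where "B = (\<lambda>z. f z - restr (poly p2) z)"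
  have AX: "A \<in> X" unfolding A_def by (rule adm_diff[OF adm fX P1])
  have BX: "B \<in> X" unfolding B_def by (rule adm_diff[OF adm fX P2])
  have eq: "restr (poly (p2 - p1)) = (\<lambda>z. A z + (-1) * B z)"
    by (rule ext) (simp add: A_def B_def restr_def poly_diff)
  have "N (\<lambda>z. A z + (-1) * B z) \<le> N A + N (\<lambda>z. (-1) * B z)"
    by (rule adm_tri[OF adm AX adm_cmult[OF adm BX]])
  also have "N (\<lambda>z. (-1) * B z) = N B" using adm_Ncmult[OF adm BX, of "-1"] by simp
  finally show ?thesis unfolding eq A_def B_def .
qed




lemma part2:
  fixes p :: "nat \<Rightarrow> complex poly"
  assumes adm: "admissible_space X N" and fX: "f \<in> X"
    and mu1: "liminf (\<lambda>n. ereal (N (mono_fn n) powr (1 / real n))) > 0"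
    and lim: "(\<lambda>n. (best_approx_error N n f / N (mono_fn n)) powr (1 / real n)) \<longlonglongrightarrow> 0"
    and hp: "\<forall>n\<ge>1. degree (p n) < n \<and> N (\<lambda>z. f z - restr (poly (p n)) z) = best_approx_error N n f"
  shows "\<exists>F. F holomorphic_on UNIV \<and>
                 (\<forall>r. 0 < r \<and> ereal r < liminf (\<lambda>n. ereal (N (mono_fn n) powr (1 / real n))) \<longrightarrow>
                      uniform_limit (ball 0 r) (\<lambda>n. poly (p n)) F sequentially)"
proof -
  define E where "E = (\<lambda>n. best_approx_error N n f)"
  define Nm where "Nm = (\<lambda>n. N (mono_fn n))"
  define \<mu> where "\<mu> = liminf (\<lambda>n. ereal (N (mono_fn n) powr (1 / real n)))"
  have Npos: "\<And>n. Nm n > 0" unfolding Nm_def by (rule mono_pos[OF adm])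
  obtain B where B: "B > 0" "\<And>n. n \<ge> 1 \<Longrightarrow> Nm n \<le> B^n" using UB[OF adm] unfolding Nm_def by blast
  have polyhol: "poly q holomorphic_on UNIV" for q :: "complex poly" by (auto intro: holomorphic_intros)
  have PX: "restr (poly q) \<in> X" for q :: "complex poly" by (rule adm_ent[OF adm]) (auto intro: holomorphic_intros)
  have Enn: "E n \<ge> 0" if "n \<ge> 1" for n
    using hp that adm_Nneg[OF adm adm_diff[OF adm fX PX[of "p n"]]] by (simp add: E_def)
  have dec: "eventually (\<lambda>n. E n \<le> \<delta>^n) sequentially" if \<delta>: "\<delta> > 0" for \<delta>
  proof -
    have "eventually (\<lambda>n. E n / Nm n \<le> (\<delta>/B)^n) sequentially"
    proof (rule root_tendsto_zeroD)
      show "(\<lambda>n. (E n / Nm n) powr (1/real n)) \<longlonglongrightarrow> 0" using lim by (simp add: E_def Nm_def)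
      show "eventually (\<lambda>n. E n / Nm n \<ge> 0) sequentially"
        using eventually_ge_at_top[of 1]
        by eventually_elim (use Enn Npos in \<open>auto intro!: divide_nonneg_pos\<close>)
    qed (use \<delta> B in simp)
    thus ?thesis using eventually_ge_at_top[of 1]
    proof eventually_elim
      case (elim n)
      have "E n \<le> (\<delta>/B)^n * Nm n" using elim(1) Npos[of n] by (simp add: divide_le_eq)
      also have "\<dots> \<le> (\<delta>/B)^n * B^n" by (rule mult_left_mono[OF B(2)[OF elim(2)]]) (use \<delta> B in simp)
      also have "\<dots> = \<delta>^n" using B by (simp add: power_divide)
      finally show ?case .
    qed
  qed
  define e where "e = (\<lambda>j. E (Suc j) + E (Suc (Suc j)))"
  have e0: "e j \<ge> 0" for j unfolding e_def using Enn[of "Suc j"] Enn[of "Suc (Suc j)"] by simp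
  have ebound: "eventually (\<lambda>j. e j \<le> 2 * \<delta>^j) sequentially" if "\<delta> > 0" "\<delta> \<le> 1" for \<delta>
  proof -
    have a: "eventually (\<lambda>j. E (Suc j) \<le> \<delta>^(Suc j)) sequentially" by (rule ev_shift1[OF dec[OF that(1)]])
    have b: "eventually (\<lambda>j. E (Suc (Suc j)) \<le> \<delta>^(Suc (Suc j))) sequentially" by (rule ev_shift1[OF ev_shift1[OF dec[OF that(1)]]])
    show ?thesis using a b
    proof eventually_elim
      case (elim j)
      have "\<delta>^(Suc j) \<le> \<delta>^j" "\<delta>^(Suc (Suc j)) \<le> \<delta>^j"
        using that by (intro power_decreasing; simp)+
      thus ?case using elim by (simp add: e_def)
    qed
  qed
  have esum: "summable e"
  proof (rule summable_comparison_test_ev[OF _ summable_mult[OF summable_geometric[of "1/2::real"]]])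
    show "eventually (\<lambda>j. norm (e j) \<le> 2 * (1/2)^j) sequentially"
      using ebound[of "1/2"] e0 by (auto elim!: eventually_mono)
  qed simp
  define t where "t = (\<lambda>n. \<Sum>i. e (i + n))"
  have tsum: "summable (\<lambda>i. e (i + n))" for n by (rule summable_ignore_initial_segment[OF esum])
  have t0: "t n \<ge> 0" for n unfolding t_def by (rule suminf_nonneg[OF tsum]) (use e0 in simp)
  have tbound: "eventually (\<lambda>n. t n \<le> 2 * \<delta>^n / (1 - \<delta>)) sequentially" if d: "\<delta> > 0" "\<delta> < 1" for \<delta>
  proof -
    obtain n0 where n0: "\<And>j. j \<ge> n0 \<Longrightarrow> e j \<le> 2 * \<delta>^j"
      using ebound[of \<delta>] d unfolding eventually_at_top_linorder by auto
    show ?thesis unfolding eventually_at_top_linorder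
    proof (intro exI[of _ n0] allI impI)
      fix n assume n: "n \<ge> n0"
      have gs: "summable (\<lambda>i. (2 * \<delta>^n) * \<delta>^i)" by (intro summable_mult summable_geometric) (use d in simp)
      have "t n \<le> (\<Sum>i. (2 * \<delta>^n) * \<delta>^i)" unfolding t_def
      proof (rule suminf_le[OF _ tsum gs])
        fix i show "e (i + n) \<le> 2 * \<delta>^n * \<delta>^i" using n0[of "i+n"] n by (simp add: power_add mult_ac)
      qed
      also have "\<dots> = 2 * \<delta>^n / (1 - \<delta>)"
        using suminf_mult[OF summable_geometric[of \<delta>], of "2 * \<delta>^n"] suminf_geometric[of \<delta>] d by simp
      finally show "t n \<le> 2 * \<delta>^n / (1 - \<delta>)" .
    qed
  qed
  define b where "b = (\<lambda>n k. coeff (p n) k)"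
  have dbound: "cmod (b (Suc (Suc j)) k - b (Suc j) k) * Nm k \<le> e j" for j k
  proof -
    have "cmod (b (Suc (Suc j)) k - b (Suc j) k) * Nm k \<le> N (restr (poly (p (Suc (Suc j)) - p (Suc j))))"
      using coef_bound[OF adm polyhol[of "p (Suc (Suc j)) - p (Suc j)"], of k]
      unfolding poly_coef by (simp add: b_def Nm_def)
    also have "\<dots> \<le> e j"
      using part2_diff[OF adm fX, of "p (Suc (Suc j))" "p (Suc j)"] hp unfolding e_def E_def
      by (simp add: add.commute)
    finally show ?thesis .
  qed
  define \<beta> where "\<beta> = (\<lambda>k. b 1 k + (\<Sum>j. b (Suc (Suc j)) k - b (Suc j) k))"
  have close: "cmod (\<beta> k - b (Suc n) k) \<le> t n / Nm k" for n k
  proof -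
    define D where "D = (\<lambda>j. b (Suc (Suc j)) k - b (Suc j) k)"
    have Dn: "norm (D j) \<le> e j / Nm k" for j
      using dbound[of j k] Npos[of k] by (simp add: D_def pos_le_divide_eq)
    have Dsn: "summable (\<lambda>j. norm (D j))"
      by (rule summable_comparison_test[OF _ summable_divide[OF esum]]) (use Dn in auto)
    have Ds: "summable D" by (rule summable_norm_cancel[OF Dsn])
    have tel: "b (Suc n) k = b 1 k + (\<Sum>j<n. D j)"
      using sum_lessThan_telescope[of "\<lambda>j. b (Suc j) k" n] by (simp add: D_def)
    have "\<beta> k - b (Suc n) k = suminf D - (\<Sum>j<n. D j)" by (simp add: \<beta>_def tel D_def)
    also have "\<dots> = (\<Sum>i. D (i + n))" using suminf_split_initial_segment[OF Ds, of n] by simp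
    finally have eq: "\<beta> k - b (Suc n) k = (\<Sum>i. D (i + n))" .
    have "cmod (\<Sum>i. D (i + n)) \<le> (\<Sum>i. norm (D (i + n)))"
      by (rule summable_norm) (rule summable_ignore_initial_segment[OF Dsn])
    also have "\<dots> \<le> (\<Sum>i. e (i + n) / Nm k)"
      by (rule suminf_le) (use Dn summable_ignore_initial_segment[OF Dsn] summable_divide[OF tsum] in auto)
    also have "\<dots> = t n / Nm k" unfolding t_def by (rule suminf_divide[OF tsum])
    finally show ?thesis unfolding eq .
  qed
  have bdiag: "b (Suc i) (Suc i) = 0" for i
    using hp[rule_format, of "Suc i"] by (simp add: b_def coeff_eq_0)
  have betab: "cmod (\<beta> (Suc i)) \<le> t i / Nm (Suc i)" for i
    using close[of "Suc i" i] by (simp add: bdiag)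
  obtain m where m0: "ereal 0 < ereal m" and mlt: "ereal m < \<mu>"
    using ereal_dense2[OF mu1[unfolded zero_ereal_def]] unfolding \<mu>_def by blast
  have m: "m > 0" using m0 by simp
  have evlow: "eventually (\<lambda>n. m'^n < Nm n) sequentially" if "ereal m' < \<mu>" "m' \<ge> 0" for m'
    unfolding Nm_def by (rule ev_lower[OF that(1)[unfolded \<mu>_def] that(2)]) (use Npos in \<open>auto simp: Nm_def intro: less_imp_le\<close>)
  have rad: "conv_radius \<beta> = \<infinity>"
  proof (rule radius_inf)
    fix \<rho> :: real assume \<rho>: "\<rho> > 0"
    define \<delta> where "\<delta> = min (1/2) (m / (2*\<rho>))"
    have d: "\<delta> > 0" "\<delta> < 1" "\<delta> \<le> 1/2" using m \<rho> by (auto simp: \<delta>_def)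
    have dr: "\<delta> * \<rho> / m \<le> 1/2" using m \<rho> by (simp add: \<delta>_def min_def field_simps)
    have "eventually (\<lambda>i. cmod (\<beta> (Suc i)) * \<rho>^(Suc i) \<le> (4/\<delta>) * (1/2)^(Suc i)) sequentially"
      using tbound[OF d(1,2)] ev_shift1[OF evlow[OF mlt less_imp_le[OF m]]]
    proof eventually_elim
      case (elim i)
      have ti: "t i \<le> 4 * \<delta>^i"
      proof -
        have "2 * \<delta>^i / (1 - \<delta>) \<le> 4 * \<delta>^i" using d by (simp add: divide_le_eq field_simps)
        thus ?thesis using elim(1) by linarith
      qed
      have "cmod (\<beta> (Suc i)) * \<rho>^(Suc i) \<le> t i / Nm (Suc i) * \<rho>^(Suc i)"
        by (rule mult_right_mono[OF betab]) (use \<rho> in simp)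
      also have "\<dots> \<le> 4 * \<delta>^i / m^(Suc i) * \<rho>^(Suc i)"
      proof (rule mult_right_mono)
        show "t i / Nm (Suc i) \<le> 4 * \<delta>^i / m^(Suc i)"
          using frac_le[OF _ ti _ less_imp_le[OF elim(2)]] d m t0[of i] by simp
      qed (use \<rho> in simp)
      also have "\<dots> = (4/\<delta>) * (\<delta> * \<rho> / m)^(Suc i)"
        using d m by (simp add: power_divide power_mult_distrib field_simps)
      also have "\<dots> \<le> (4/\<delta>) * (1/2)^(Suc i)"
        by (intro mult_left_mono power_mono dr) (use d m \<rho> in auto)
      finally show ?case .
    qed
    hence "eventually (\<lambda>k. cmod (\<beta> k) * \<rho>^k \<le> (4/\<delta>) * (1/2)^k) sequentially"
      by (rule iffD1[OF eventually_sequentially_Suc[of "\<lambda>k. cmod (\<beta> k) * \<rho>^k \<le> (4/\<delta>) * (1/2)^k"]])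
    thus "\<exists>C. eventually (\<lambda>k. cmod (\<beta> k) * \<rho>^k \<le> C * (1/2)^k) sequentially" by blast
  qed
  note ec = entire_coeffs[OF rad]
  define F where "F = eval_fps (Abs_fps \<beta>)"
  show ?thesis
  proof (intro exI[of _ F] conjI allI impI)
    show "F holomorphic_on UNIV" unfolding F_def by (rule ec(1))
    fix r :: real assume r: "0 < r \<and> ereal r < liminf (\<lambda>n. ereal (N (mono_fn n) powr (1 / real n)))"
    obtain m' where m': "ereal r < ereal m'" "ereal m' < \<mu>" using ereal_dense2 r unfolding \<mu>_def by blast
    have rm: "r < m'" "r > 0" using m' r by auto
    have Ssum: "summable (\<lambda>k. r^k / Nm k)"
    proof (rule summable_comparison_test_ev[OF _ summable_geometric[of "r/m'"]])
      show "eventually (\<lambda>k. norm (r^k / Nm k) \<le> (r/m')^k) sequentially"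
        using evlow[OF m'(2) less_imp_le[OF less_trans[OF rm(2) rm(1)]]]
      proof eventually_elim
        case (elim k)
        have "r^k / Nm k \<le> r^k / m'^k"
          by (rule divide_left_mono) (use elim rm Npos[of k] in auto)
        thus ?case using rm Npos[of k] by (simp add: power_divide)
      qed
    qed (use rm in simp)
    define S where "S = (\<Sum>k. r^k / Nm k)"
    have S0: "S \<ge> 0" unfolding S_def by (rule suminf_nonneg[OF Ssum]) (use rm Npos in \<open>auto intro: less_imp_le\<close>)
    have unif: "cmod (poly (p (Suc i)) z - F z) \<le> t i * S" if z: "z \<in> ball 0 r" for i z
    proof -
      have zr: "cmod z \<le> r" using z by simp
      have sm: "(\<lambda>k. (b (Suc i) k - \<beta> k) * z^k) sums (poly (p (Suc i)) z - F z)"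
        unfolding F_def using sums_diff[OF poly_sums[of "p (Suc i)" z] ec(3)[of z]] by (simp add: b_def algebra_simps)
      have nb: "norm ((b (Suc i) k - \<beta> k) * z^k) \<le> t i * (r^k / Nm k)" for k
      proof -
        have "norm ((b (Suc i) k - \<beta> k) * z^k) = cmod (\<beta> k - b (Suc i) k) * cmod z ^ k"
          by (simp add: norm_mult norm_power norm_minus_commute)
        also have "\<dots> \<le> (t i / Nm k) * r^k"
          by (intro mult_mono close power_mono zr) (use t0 Npos[of k] in auto)
        finally show ?thesis by simp
      qed
      have nsum: "summable (\<lambda>k. norm ((b (Suc i) k - \<beta> k) * z^k))"
        by (rule summable_comparison_test[OF _ summable_mult[OF Ssum]]) (use nb in auto)
      have "cmod (poly (p (Suc i)) z - F z) = norm (\<Sum>k. (b (Suc i) k - \<beta> k) * z^k)"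
        using sums_unique[OF sm] by simp
      also have "\<dots> \<le> (\<Sum>k. norm ((b (Suc i) k - \<beta> k) * z^k))" by (rule summable_norm[OF nsum])
      also have "\<dots> \<le> (\<Sum>k. t i * (r^k / Nm k))"
        by (rule suminf_le[OF nb nsum summable_mult[OF Ssum]])
      also have "\<dots> = t i * S" unfolding S_def by (rule suminf_mult[OF Ssum])
      finally show ?thesis .
    qed
    show "uniform_limit (ball 0 r) (\<lambda>n. poly (p n)) F sequentially"
    proof (rule uniform_limitI)
      fix \<epsilon> :: real assume \<epsilon>: "\<epsilon> > 0"
      have "(\<lambda>i. 4 * (1/2)^i * S) \<longlonglongrightarrow> 4 * 0 * S"
        by (intro tendsto_intros) simp
      hence ev1: "eventually (\<lambda>i. 4 * (1/2)^i * S < \<epsilon>) sequentially"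
        using \<epsilon> by (intro order_tendstoD) auto
      have tb2: "eventually (\<lambda>i. t i \<le> 2 * (1/2)^i / (1 - 1/2)) sequentially"
        by (rule tbound) auto
      have "eventually (\<lambda>i. \<forall>z\<in>ball 0 r. dist (poly (p (Suc i)) z) (F z) < \<epsilon>) sequentially"
        using ev1 tb2
      proof eventually_elim
        case (elim i)
        show ?case
        proof
          fix z :: complex assume z: "z \<in> ball 0 r"
          have "t i * S \<le> 4 * (1/2)^i * S" by (rule mult_right_mono) (use elim(2) S0 in simp_all)
          thus "dist (poly (p (Suc i)) z) (F z) < \<epsilon>"
            using unif[OF z, of i] elim(1) by (simp add: dist_norm)
        qed
      qed
      thus "eventually (\<lambda>n. \<forall>z\<in>ball 0 r. dist (poly (p n) z) (F z) < \<epsilon>) sequentially"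
        by (rule iffD1[OF eventually_sequentially_Suc[of "\<lambda>n. \<forall>z\<in>ball 0 r. dist (poly (p n) z) (F z) < \<epsilon>"]])
    qed
  qed
qed



theorem theorem4p1:
  fixes X :: "(complex \<Rightarrow> complex) set" and N :: "(complex \<Rightarrow> complex) \<Rightarrow> real"
    and f :: "complex \<Rightarrow> complex"
  assumes "admissible_space X N"
    and "f \<in> X"
    and mu1: "liminf (\<lambda>n. ereal (N (mono_fn n) powr (1 / real n))) > 0"
  shows "(entire_on_disk f \<longrightarrow>
           (\<lambda>n. (best_approx_error N n f / N (mono_fn n)) powr (1 / real n)) \<longlonglongrightarrow> 0) \<and>
         ((\<lambda>n. (best_approx_error N n f / N (mono_fn n)) powr (1 / real n)) \<longlonglongrightarrow> 0 \<longrightarrow>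
           (\<forall>p :: nat \<Rightarrow> complex poly.
              (\<forall>n\<ge>1. degree (p n) < n \<and>
                 N (\<lambda>z. f z - restr (poly (p n)) z) = best_approx_error N n f) \<longrightarrow>
              (\<exists>F. F holomorphic_on UNIV \<and>
                 (\<forall>r. 0 < r \<and> ereal r < liminf (\<lambda>n. ereal (N (mono_fn n) powr (1 / real n))) \<longrightarrow>
                      uniform_limit (ball 0 r) (\<lambda>n. poly (p n)) F sequentially))))"
  proof (intro conjI impI allI)
  assume "entire_on_disk f"
  thus "(\<lambda>n. (best_approx_error N n f / N (mono_fn n)) powr (1 / real n)) \<longlonglongrightarrow> 0"
    by (rule part1[OF assms(1,2) mu1])
next
  fix p :: "nat \<Rightarrow> complex poly"
  assume "(\<lambda>n. (best_approx_error N n f / N (mono_fn n)) powr (1 / real n)) \<longlonglongrightarrow> 0"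
    and "\<forall>n\<ge>1. degree (p n) < n \<and> N (\<lambda>z. f z - restr (poly (p n)) z) = best_approx_error N n f"
  thus "\<exists>F. F holomorphic_on UNIV \<and>
                 (\<forall>r. 0 < r \<and> ereal r < liminf (\<lambda>n. ereal (N (mono_fn n) powr (1 / real n))) \<longrightarrow>
                      uniform_limit (ball 0 r) (\<lambda>n. poly (p n)) F sequentially)"
    by (rule part2[OF assms(1,2) mu1])
qed

end
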